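(* Let $\beta\in\mathbb C\setminus\mathbb Z$ and let $Q_+,\widetilde Q_+,Q_-,\widetilde Q_-$ be entire functions such that each of the pairs $(Q_+,Q_-)$, $(\widetilde Q_+,Q_-)$ and $(Q_+,\widetilde Q_-)$ satisfies the QQ system with momentum $\beta$. Then $Q_+=\widetilde Q_+$ and $Q_-=\widetilde Q_-$.
   Context: A pair $(Q_+,Q_-)$ of entire functions satisfies the QQ system with momentum $\beta$ if for all $E\in\mathbb C$: $e^{i\frac{\beta\pi}2}Q_+(iE)Q_-(-iE)-e^{-i\frac{\beta\pi}2}Q_+(-iE)Q_-(iE)=i\,e^{\frac{E\pi}4}$. *)

theory Defs
  imports "HOL-Complex_Analysis.Complex_Analysis"
begin

definition QQ_system :: "complex \<Rightarrow> (complex \<Rightarrow> complex) \<Rightarrow> (complex \<Rightarrow> complex) \<Rightarrow> bool" where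
  "QQ_system \<beta> Qp Qm \<longleftrightarrow>
     (\<forall>E::complex.
        exp (\<i> * \<beta> * of_real pi / 2) * Qp (\<i> * E) * Qm (- \<i> * E)
      - exp (- \<i> * \<beta> * of_real pi / 2) * Qp (- \<i> * E) * Qm (\<i> * E)
      = \<i> * exp (E * of_real pi / 4))"

end

theory Submission
  imports Defs
begin

lemma core:
  fixes c :: complex and D P :: "complex \<Rightarrow> complex"
  assumes c2: "c^2 \<noteq> 1" and hD: "D holomorphic_on UNIV" and hP: "P holomorphic_on UNIV"
    and w: "P w \<noteq> 0"
    and eq: "\<And>z. c * D z * P (-z) = D (-z) * P z"
  shows "D = (\<lambda>_. 0)"
proof -
  have X: "D z * P (-z) = 0" for z
  proof -
    have 1: "c * (D z * P (-z)) = D (-z) * P z" using eq[of z] by (simp add: mult.assoc)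
    have 2: "c * (D (-z) * P z) = D z * P (-z)" using eq[of "-z"] by (simp add: mult.assoc)
    have "c^2 * (D z * P (-z)) = 1 * (D z * P (-z))"
      using 1 2 by (simp add: power2_eq_square mult.assoc)
    then show ?thesis using c2 by (metis mult_cancel_right mult_zero_right)
  qed
  let ?S = "{z. P (-z) \<noteq> 0}"
  have cP: "continuous_on UNIV (\<lambda>z. P (-z))"
    by (intro continuous_on_compose2[OF holomorphic_on_imp_continuous_on[OF hP]]) (auto intro: continuous_intros)
  have oS: "open ?S"
    using open_Collect_neq[OF cP continuous_on_const] by simp
  have ne: "?S \<noteq> {}" using w by (metis (mono_tags) empty_Collect_eq minus_minus)
  show ?thesis
  proof
    fix z
    show "D z = 0"
      by (rule analytic_continuation_open[OF oS open_UNIV ne connected_UNIV _ hD holomorphic_on_const[of 0]])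
         (use X in auto)
  qed
qed

theorem lemma6p2:
  fixes \<beta> :: complex
    and Qp Qpt Qm Qmt :: "complex \<Rightarrow> complex"
  assumes "\<beta> \<notin> \<int>"
    and "Qp holomorphic_on UNIV" and "Qpt holomorphic_on UNIV"
    and "Qm holomorphic_on UNIV" and "Qmt holomorphic_on UNIV"
    and "QQ_system \<beta> Qp Qm"
    and "QQ_system \<beta> Qpt Qm"
    and "QQ_system \<beta> Qp Qmt"
  shows "Qp = Qpt \<and> Qm = Qmt"
proof -
  define a where "a = exp (\<i> * \<beta> * of_real pi / 2)"
  define a' where "a' = exp (- \<i> * \<beta> * of_real pi / 2)"
  have aa': "a * a' = 1" unfolding a_def a'_def by (simp add: exp_add[symmetric])
  define c where "c = a * a"
  have c2: "c^2 \<noteq> 1"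
  proof
    assume h: "c^2 = 1"
    have "c^2 = exp (2 * pi * \<i> * \<beta>)" unfolding c_def a_def
      by (simp add: power2_eq_square exp_add[symmetric] algebra_simps)
    then have "exp (2 * pi * \<i> * \<beta>) = 1" using h by simp
    then obtain n :: int where r: "Im \<beta> = 0" and i: "2 * pi * Re \<beta> = of_int (2 * n) * pi"
      by (auto simp: exp_eq_1)
    then have "Re \<beta> = of_int n" by simp
    then have "\<beta> = of_int n" using r by (simp add: complex_eq_iff)
    then show False using assms(1) by simp
  qed
  have Q1: "\<And>E. a * Qp (\<i> * E) * Qm (- \<i> * E) - a' * Qp (- \<i> * E) * Qm (\<i> * E) = \<i> * exp (E * of_real pi / 4)"
    using assms(6) unfolding QQ_system_def a_def a'_def by blast
  have Q2: "\<And>E. a * Qpt (\<i> * E) * Qm (- \<i> * E) - a' * Qpt (- \<i> * E) * Qm (\<i> * E) = \<i> * exp (E * of_real pi / 4)"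
    using assms(7) unfolding QQ_system_def a_def a'_def by blast
  have Q3: "\<And>E. a * Qp (\<i> * E) * Qmt (- \<i> * E) - a' * Qp (- \<i> * E) * Qmt (\<i> * E) = \<i> * exp (E * of_real pi / 4)"
    using assms(8) unfolding QQ_system_def a_def a'_def by blast
  have Qp0: "Qp 0 \<noteq> 0" and Qm0: "Qm 0 \<noteq> 0" using Q1[of 0] by auto
  have "(\<lambda>z. Qp z - Qpt z) = (\<lambda>_. 0)"
  proof (rule core[OF c2 _ assms(4) Qm0])
    show "(\<lambda>z. Qp z - Qpt z) holomorphic_on UNIV" using assms(2,3) by (intro holomorphic_intros)
    fix z
    have h: "a * (Qp z - Qpt z) * Qm (-z) = a' * (Qp (-z) - Qpt (-z)) * Qm z"
      using Q1[of "- \<i> * z"] Q2[of "- \<i> * z"] by (simp add: algebra_simps)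
    have "c * (Qp z - Qpt z) * Qm (- z) = a * (a * (Qp z - Qpt z) * Qm (-z))"
      by (simp add: c_def mult.assoc)
    also have "\<dots> = a * (a' * ((Qp (-z) - Qpt (-z)) * Qm z))" using h by (simp add: mult.assoc)
    also have "\<dots> = (Qp (- z) - Qpt (- z)) * Qm z" using aa' by (simp add: mult.assoc[symmetric])
    finally show "c * (Qp z - Qpt z) * Qm (- z) = (Qp (- z) - Qpt (- z)) * Qm z" .
  qed
  moreover have "(\<lambda>z. Qm z - Qmt z) = (\<lambda>_. 0)"
  proof (rule core[OF c2 _ assms(2) Qp0])
    show "(\<lambda>z. Qm z - Qmt z) holomorphic_on UNIV" using assms(4,5) by (intro holomorphic_intros)
    fix z
    have h: "a * Qp (-z) * (Qm z - Qmt z) = a' * Qp z * (Qm (-z) - Qmt (-z))"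
      using Q1[of "\<i> * z"] Q3[of "\<i> * z"] by (simp add: algebra_simps)
    have "c * (Qm z - Qmt z) * Qp (- z) = a * (a * Qp (-z) * (Qm z - Qmt z))"
      by (simp add: c_def algebra_simps)
    also have "\<dots> = a * (a' * Qp z * (Qm (-z) - Qmt (-z)))" by (rule arg_cong[where f="\<lambda>t. a * t"], rule h)
    also have "\<dots> = (a * a') * ((Qm (- z) - Qmt (- z)) * Qp z)" by (simp only: mult.assoc mult.commute[of "Qp z"])
    also have "\<dots> = (Qm (- z) - Qmt (- z)) * Qp z" using aa' by simp
    finally show "c * (Qm z - Qmt z) * Qp (- z) = (Qm (- z) - Qmt (- z)) * Qp z" .
  qed
  ultimately show ?thesis by (simp add: fun_eq_iff)
qed

end
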